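(* For every $G^*\in\mathcal{G}^*_{d,c}(n)$, \[ \lvert S_n G^* \cap \phi^{-1}(L) \rvert \geq \frac{2}{dn}\, \lvert S_n G^* \rvert, \] where $L=\{x\in\{0,1\}^{nd/2}: \lvert x\rvert\ge T_c-1\}$ and $T_c=c\cdot\frac{dn}{2}\cdot\frac{d-1}{d+1}$.
   Context: Fix $0<c<1$, $n,d$ with $dn$ even, and $T_{\max}=\binom d2\frac n3$. $\mathcal{G}^*_{d,c}(n)$ is the set of $d$-regular graphs on nodes $\{1,\dots,n\}$ with at least $c\cdot T_{\max}$ triangles, where at each node the $d$ incident edges carry distinct labels $1,\dots,d$. Configuration ordering: for edges $e=(i_1j_1)$, $f=(i_2j_2)$ with $i_1<j_1$, $i_2<j_2$, $e\prec f$ if $i_1<i_2$, or $i_1=i_2$ and the label of $e$ at $i_1$ is smaller than that of $f$. With $e_1\prec\dots\prec e_{nd/2}$ the edges and $G^*[k]$ the subgraph on $e_1,\dots,e_k$, $\phi(G^* )\in\{0,1\}^{nd/2}$ has $\phi(G^* )(k)=1$ iff $e_k$ lies in a triangle of $G^*[k]$. For $x\in\{0,1\}^{nd/2}$, $\lvert x\rvert=\sum_j x(j)$. The symmetric group $S_n$ acts on $\mathcal{G}^*_{d,c}(n)$ by permuting node labels (keeping edge labels): $G^*_\sigma$ is the result of applying $\sigma$, and $S_nG^*=\{G^*_\sigma:\sigma\in S_n\}$ is the orbit. *)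

theory Defs
  imports Complex_Main "HOL-Combinatorics.Permutations"
begin

text \<open>An edge-labelled graph on nodes {1..n} is encoded by a function lab :: nat => nat => nat:
  lab i j = 0 iff ij is not an edge; otherwise lab i j is the label of edge ij at node i.\<close>

type_synonym lgraph = "nat \<Rightarrow> nat \<Rightarrow> nat"

definition labelled_regular :: "nat \<Rightarrow> nat \<Rightarrow> lgraph \<Rightarrow> bool" where
  "labelled_regular n d G \<longleftrightarrow>
     (\<forall>i j. G i j \<noteq> 0 \<longrightarrow> i \<in> {1..n} \<and> j \<in> {1..n} \<and> i \<noteq> j \<and> G j i \<noteq> 0) \<and>
     (\<forall>i\<in>{1..n}. bij_betw (G i) {j. G i j \<noteq> 0} {1..d})"

definition num_triangles :: "lgraph \<Rightarrow> nat" where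
  "num_triangles G = card {T. \<exists>a b c. T = {a, b, c} \<and> a < b \<and> b < c \<and>
                                       G a b \<noteq> 0 \<and> G b c \<noteq> 0 \<and> G a c \<noteq> 0}"

definition T_max :: "nat \<Rightarrow> nat \<Rightarrow> real" where
  "T_max n d = real (d choose 2) * real n / 3"

definition G_star :: "nat \<Rightarrow> real \<Rightarrow> nat \<Rightarrow> lgraph set" where
  "G_star d c n = {G. labelled_regular n d G \<and> real (num_triangles G) \<ge> c * T_max n d}"

definition edges :: "lgraph \<Rightarrow> (nat \<times> nat) set" where
  "edges G = {(i, j). i < j \<and> G i j \<noteq> 0}"

definition prec :: "lgraph \<Rightarrow> nat \<times> nat \<Rightarrow> nat \<times> nat \<Rightarrow> bool" where
  "prec G e f \<longleftrightarrow> fst e < fst f \<or> (fst e = fst f \<and> G (fst e) (snd e) < G (fst f) (snd f))"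

definition nth_edge :: "lgraph \<Rightarrow> nat \<Rightarrow> nat \<times> nat" where
  "nth_edge G k = (THE e. e \<in> edges G \<and> card {f \<in> edges G. prec G f e} = k - 1)"

definition prefix_edges :: "lgraph \<Rightarrow> nat \<Rightarrow> (nat \<times> nat) set" where
  "prefix_edges G k = {e \<in> edges G. card {f \<in> edges G. prec G f e} < k}"

definition adjE :: "(nat \<times> nat) set \<Rightarrow> nat \<Rightarrow> nat \<Rightarrow> bool" where
  "adjE E a b \<longleftrightarrow> a \<noteq> b \<and> (min a b, max a b) \<in> E"

definition in_triangle :: "(nat \<times> nat) set \<Rightarrow> nat \<times> nat \<Rightarrow> bool" where
  "in_triangle E e \<longleftrightarrow> e \<in> E \<and> (\<exists>w. adjE E (fst e) w \<and> adjE E (snd e) w)"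

definition phi :: "lgraph \<Rightarrow> nat \<Rightarrow> nat" where
  "phi G k = (if in_triangle (prefix_edges G k) (nth_edge G k) then 1 else 0)"

definition weight :: "(nat \<Rightarrow> nat) \<Rightarrow> nat \<Rightarrow> nat" where
  "weight x m = (\<Sum>j = 1..m. x j)"

definition perm_act :: "(nat \<Rightarrow> nat) \<Rightarrow> lgraph \<Rightarrow> lgraph" where
  "perm_act \<sigma> G = (\<lambda>x y. G (inv \<sigma> x) (inv \<sigma> y))"

definition orbit :: "nat \<Rightarrow> lgraph \<Rightarrow> lgraph set" where
  "orbit n G = {perm_act \<sigma> G | \<sigma>. \<sigma> permutes {1..n}}"

definition T_c :: "real \<Rightarrow> nat \<Rightarrow> nat \<Rightarrow> real" where
  "T_c c d n = c * (real d * real n / 2) * ((real d - 1) / (real d + 1))"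

definition L_set :: "real \<Rightarrow> nat \<Rightarrow> nat \<Rightarrow> (nat \<Rightarrow> nat) set" where
  "L_set c d n = {x. real (weight x (d * n div 2)) \<ge> T_c c d n - 1}"

end

theory Submission
  imports Defs
begin

context
  fixes n d :: nat and H :: lgraph
  assumes LR: "labelled_regular n d H"
begin

lemma lr_edge: "H i j \<noteq> 0 \<Longrightarrow> i \<in> {1..n} \<and> j \<in> {1..n} \<and> i \<noteq> j \<and> H j i \<noteq> 0"
  using LR unfolding labelled_regular_def by blast

lemma lr_edge': "H i j \<noteq> 0 \<Longrightarrow> i \<in> {1..n} \<and> j \<in> {1..n} \<and> i \<noteq> j"
  using lr_edge by blast

lemma lr_bij: "i \<in> {1..n} \<Longrightarrow> bij_betw (H i) {j. H i j \<noteq> 0} {1..d}"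
  using LR unfolding labelled_regular_def by blast

lemma edges_sub: "edges H \<subseteq> {1..n} \<times> {1..n}"
  using lr_edge' unfolding edges_def by auto

lemma edges_fin: "finite (edges H)"
  by (rule finite_subset[OF edges_sub]) auto

lemma card_edges: "2 * card (edges H) = d * n"
proof -
  define A where "A = {(i,j). H i j \<noteq> 0}"
  have A_eq: "A = Sigma {1..n} (\<lambda>i. {j. H i j \<noteq> 0})"
  proof (intro equalityI subsetI)
    fix p assume "p \<in> A"
    then obtain i j where p: "p = (i,j)" "H i j \<noteq> 0" unfolding A_def by auto
    then show "p \<in> Sigma {1..n} (\<lambda>i. {j. H i j \<noteq> 0})" using lr_edge'[OF p(2)] by simp
  next
    fix p assume "p \<in> Sigma {1..n} (\<lambda>i. {j. H i j \<noteq> 0})"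
    then show "p \<in> A" unfolding A_def by auto
  qed
  have cN: "card {j. H i j \<noteq> 0} = d" if "i \<in> {1..n}" for i
    using bij_betw_same_card[OF lr_bij[OF that]] by simp
  have finN: "finite {j. H i j \<noteq> 0}" for i
  proof (rule finite_subset)
    show "{j. H i j \<noteq> 0} \<subseteq> {1..n}" using lr_edge' by blast
  qed simp
  have "card A = (\<Sum>i\<in>{1..n}. card {j. H i j \<noteq> 0})"
    unfolding A_eq using finN by (intro card_SigmaI) auto
  also have "\<dots> = (\<Sum>i\<in>{1..n}. d)" by (rule sum.cong[OF refl]) (rule cN)
  also have "\<dots> = d * n" by simp
  finally have "card A = d * n" .
  moreover have "A = edges H \<union> prod.swap ` edges H"
  proof (intro equalityI subsetI)
    fix p assume "p \<in> A"
    then obtain i j where p: "p = (i,j)" "H i j \<noteq> 0" unfolding A_def by auto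
    have "i \<noteq> j" "H j i \<noteq> 0" using lr_edge[OF p(2)] by auto
    then consider "i < j" | "j < i" by linarith
    then show "p \<in> edges H \<union> prod.swap ` edges H"
    proof cases
      case 1 then show ?thesis using p unfolding edges_def by auto
    next
      case 2
      then have "(j,i) \<in> edges H" using \<open>H j i \<noteq> 0\<close> unfolding edges_def by auto
      moreover have "p = prod.swap (j,i)" using p by simp
      ultimately show ?thesis by blast
    qed
  next
    fix p assume "p \<in> edges H \<union> prod.swap ` edges H"
    then consider "p \<in> edges H" | q where "q \<in> edges H" "p = prod.swap q" by blast
    then show "p \<in> A"
    proof cases
      case 1 then show ?thesis unfolding A_def edges_def by auto
    next
      case 2
      obtain i j where q: "q = (i,j)" by (cases q)
      have "H i j \<noteq> 0" using 2 q unfolding edges_def by auto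
      then have "H j i \<noteq> 0" using lr_edge by blast
      then show ?thesis using 2 q unfolding A_def by simp
    qed
  qed
  moreover have "edges H \<inter> prod.swap ` edges H = {}"
    unfolding edges_def by (auto simp: image_iff)
  moreover have "card (prod.swap ` edges H) = card (edges H)"
    by (rule card_image) (auto simp: inj_on_def)
  ultimately show ?thesis
    using card_Un_disjoint[OF edges_fin finite_imageI[OF edges_fin]] by simp
qed

definition rk :: "nat \<times> nat \<Rightarrow> nat" where
  "rk e = card {f \<in> edges H. prec H f e}"

lemma prec_trans: "prec H e f \<Longrightarrow> prec H f g \<Longrightarrow> prec H e g"
  unfolding prec_def by auto

lemma prec_irrefl: "\<not> prec H e e"
  unfolding prec_def by auto

lemma prec_total:
  assumes "e \<in> edges H" "f \<in> edges H" "e \<noteq> f"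
  shows "prec H e f \<or> prec H f e"
proof (cases "fst e = fst f")
  case True
  obtain u a where e: "e = (u,a)" by (cases e)
  obtain b where f: "f = (u,b)" using True e by (cases f) auto
  have u: "u \<in> {1..n}" using assms(1) e lr_edge' unfolding edges_def by auto
  have "inj_on (H u) {j. H u j \<noteq> 0}" using lr_bij[OF u] bij_betw_def by blast
  moreover have "a \<noteq> b" using assms e f by auto
  moreover have "H u a \<noteq> 0" "H u b \<noteq> 0" using assms e f unfolding edges_def by auto
  ultimately have "H u a \<noteq> H u b" unfolding inj_on_def by blast
  then show ?thesis unfolding prec_def e f by auto
next
  case False then show ?thesis unfolding prec_def by auto
qed

lemma rk_less:
  assumes "f \<in> edges H" "prec H f e"
  shows "rk f < rk e"
proof -
  have sub: "{g \<in> edges H. prec H g f} \<subseteq> {g \<in> edges H. prec H g e}"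
  proof
    fix g assume "g \<in> {g \<in> edges H. prec H g f}"
    then show "g \<in> {g \<in> edges H. prec H g e}" using prec_trans[OF _ assms(2), of g] by simp
  qed
  have nf: "f \<notin> {g \<in> edges H. prec H g f}" using prec_irrefl by simp
  have ff: "f \<in> {g \<in> edges H. prec H g e}" using assms by simp
  have "{g \<in> edges H. prec H g f} \<noteq> {g \<in> edges H. prec H g e}" using nf ff by metis
  then have "{g \<in> edges H. prec H g f} \<subset> {g \<in> edges H. prec H g e}" using sub by (rule psubsetI[rotated])
  moreover have "finite {g \<in> edges H. prec H g e}" using edges_fin by simp
  ultimately show ?thesis unfolding rk_def by (rule psubset_card_mono[rotated])
qed

lemma rk_inj: "inj_on rk (edges H)"
proof (rule inj_onI)
  fix e f assume ef: "e \<in> edges H" "f \<in> edges H" "rk e = rk f"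
  show "e = f"
  proof (rule ccontr)
    assume "e \<noteq> f"
    then have "prec H e f \<or> prec H f e" using prec_total ef by blast
    then show False
    proof
      assume "prec H e f" then have "rk e < rk f" by (rule rk_less[OF ef(1)])
      then show False using ef(3) by simp
    next
      assume "prec H f e" then have "rk f < rk e" by (rule rk_less[OF ef(2)])
      then show False using ef(3) by simp
    qed
  qed
qed

lemma rk_bound: "e \<in> edges H \<Longrightarrow> rk e < card (edges H)"
  unfolding rk_def
  by (rule psubset_card_mono[OF edges_fin]) (use prec_irrefl in blast)

lemma nth_rk: "e \<in> edges H \<Longrightarrow> nth_edge H (rk e + 1) = e"
  unfolding nth_edge_def
proof (rule the_equality)
  assume e: "e \<in> edges H"
  show "e \<in> edges H \<and> card {f \<in> edges H. prec H f e} = rk e + 1 - 1"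
    using e by (simp add: rk_def)
  fix e' assume "e' \<in> edges H \<and> card {f \<in> edges H. prec H f e'} = rk e + 1 - 1"
  then have "e' \<in> edges H" "rk e' = rk e" by (simp_all add: rk_def)
  then show "e' = e" using rk_inj e unfolding inj_on_def by blast
qed

lemma phi_rk:
  assumes "(u,w) \<in> edges H" "x < u" "H u x \<noteq> 0" "H w x \<noteq> 0"
  shows "phi H (rk (u,w) + 1) = 1"
proof -
  let ?P = "prefix_edges H (rk (u,w) + 1)"
  have P: "f \<in> ?P" if "f \<in> edges H" "rk f \<le> rk (u,w)" for f
    using that unfolding prefix_edges_def rk_def by auto
  have uw: "u < w" using assms(1) unfolding edges_def by auto
  have s1: "H x u \<noteq> 0" "H x w \<noteq> 0" using lr_edge[OF assms(3)] lr_edge[OF assms(4)] by auto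
  have e1: "(x,u) \<in> edges H" using assms s1 unfolding edges_def by auto
  have e2: "(x,w) \<in> edges H" using assms uw s1 unfolding edges_def by auto
  have "prec H (x,u) (u,w)" "prec H (x,w) (u,w)" using assms uw unfolding prec_def by auto
  then have "rk (x,u) < rk (u,w)" "rk (x,w) < rk (u,w)" using rk_less e1 e2 by auto
  then have m: "(x,u) \<in> ?P" "(x,w) \<in> ?P" "(u,w) \<in> ?P"
    using P[OF e1] P[OF e2] P[OF assms(1)] by auto
  have mm: "min u x = x" "max u x = u" "min w x = x" "max w x = w" using assms(2) uw by auto
  have "adjE ?P u x" "adjE ?P w x" unfolding adjE_def mm using m assms(2) uw by auto
  then have "in_triangle ?P (u,w)"
    unfolding in_triangle_def fst_conv snd_conv using m(3) by blast
  then show ?thesis unfolding phi_def using nth_rk[OF assms(1)] by simp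
qed

end

lemma perm_act_app: "\<sigma> permutes S \<Longrightarrow> perm_act \<sigma> G (\<sigma> a) (\<sigma> b) = G a b"
  unfolding perm_act_def by (simp add: permutes_inverses)

lemma perm_act_comp:
  assumes "\<tau> permutes S" "\<sigma> permutes S"
  shows "perm_act \<tau> (perm_act \<sigma> G) = perm_act (\<tau> \<circ> \<sigma>) G"
  unfolding perm_act_def
  using o_inv_distrib[OF permutes_bij[OF assms(1)] permutes_bij[OF assms(2)]]
  by (simp add: fun_eq_iff)

lemma perm_act_inj:
  assumes "\<tau> permutes S"
  shows "inj (perm_act \<tau>)"
proof (rule injI)
  fix G1 G2 assume "perm_act \<tau> G1 = perm_act \<tau> G2"
  then have "perm_act \<tau> G1 (\<tau> a) (\<tau> b) = perm_act \<tau> G2 (\<tau> a) (\<tau> b)" for a b by simp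
  then show "G1 = G2" using perm_act_app[OF assms] by (simp add: fun_eq_iff)
qed

lemma perm_act_lr:
  assumes "\<sigma> permutes {1..n}" "labelled_regular n d G"
  shows "labelled_regular n d (perm_act \<sigma> G)"
proof -
  have si: "inv \<sigma> permutes {1..n}" using permutes_inv[OF assms(1)] .
  have A: "i \<in> {1..n} \<and> j \<in> {1..n} \<and> i \<noteq> j \<and> perm_act \<sigma> G j i \<noteq> 0"
    if "perm_act \<sigma> G i j \<noteq> 0" for i j
  proof -
    have "G (inv \<sigma> i) (inv \<sigma> j) \<noteq> 0" using that unfolding perm_act_def .
    then have "inv \<sigma> i \<in> {1..n} \<and> inv \<sigma> j \<in> {1..n} \<and> inv \<sigma> i \<noteq> inv \<sigma> j \<and> G (inv \<sigma> j) (inv \<sigma> i) \<noteq> 0"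
      using lr_edge[OF assms(2)] by blast
    then show ?thesis
      using permutes_in_image[OF si] unfolding perm_act_def by auto
  qed
  have B: "bij_betw (perm_act \<sigma> G i) {j. perm_act \<sigma> G i j \<noteq> 0} {1..d}" if "i \<in> {1..n}" for i
  proof -
    have i': "inv \<sigma> i \<in> {1..n}" using that permutes_in_image[OF si] by auto
    have "bij_betw (inv \<sigma>) {j. perm_act \<sigma> G i j \<noteq> 0} {j. G (inv \<sigma> i) j \<noteq> 0}"
    proof -
      have "bij_betw (inv \<sigma>) {j. perm_act \<sigma> G i j \<noteq> 0} (inv \<sigma> ` {j. perm_act \<sigma> G i j \<noteq> 0})"
        by (rule bij_betw_subset[OF permutes_bij[OF si]]) auto
      moreover have "inv \<sigma> ` {j. perm_act \<sigma> G i j \<noteq> 0} = {j. G (inv \<sigma> i) j \<noteq> 0}"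
        unfolding perm_act_def using permutes_inverses[OF assms(1)]
        by (auto simp: image_iff) (metis)
      ultimately show ?thesis by simp
    qed
    from bij_betw_trans[OF this lr_bij[OF assms(2) i']]
    show ?thesis unfolding perm_act_def by (simp add: o_def)
  qed
  show ?thesis unfolding labelled_regular_def using A B by blast
qed

lemma count_min:
  fixes A S :: "'a::linorder set" and x :: 'a
  assumes "finite A" "S \<subseteq> A" "x \<in> S"
  shows "fact (card A) \<le> card S * card {\<sigma>. \<sigma> permutes A \<and> (\<forall>y\<in>S-{x}. \<sigma> x < \<sigma> y)}"
proof -
  define B where "B y = {\<sigma>. \<sigma> permutes A \<and> (\<forall>z\<in>S-{y}. \<sigma> y < \<sigma> z)}" for y
  have finS: "finite S" using assms finite_subset by blast
  have finB: "finite (B y)" for y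
    unfolding B_def by (rule finite_subset[OF _ finite_permutations[OF assms(1)]]) auto
  have le: "card (B y) \<le> card (B x)" if y: "y \<in> S" for y
  proof (rule card_inj_on_le[OF _ _ finB])
    show "inj_on (\<lambda>\<sigma>. \<sigma> \<circ> transpose x y) (B y)"
      by (rule inj_onI) (metis comp_assoc comp_id transpose_comp_involutory)
    show "(\<lambda>\<sigma>. \<sigma> \<circ> transpose x y) ` B y \<subseteq> B x"
    proof
      fix \<tau> assume "\<tau> \<in> (\<lambda>\<sigma>. \<sigma> \<circ> transpose x y) ` B y"
      then obtain \<sigma> where s: "\<sigma> \<in> B y" and t: "\<tau> = \<sigma> \<circ> transpose x y" by blast
      have "\<tau> permutes A" using s assms y unfolding t B_def
        by (auto intro!: permutes_compose permutes_swap_id)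
      moreover have "\<tau> x < \<tau> z" if "z \<in> S - {x}" for z
        using s that assms y unfolding t B_def by (auto simp: transpose_def)
      ultimately show "\<tau> \<in> B x" unfolding B_def by auto
    qed
  qed
  have sub: "{\<sigma>. \<sigma> permutes A} \<subseteq> (\<Union>y\<in>S. B y)"
  proof
    fix \<sigma> assume s: "\<sigma> \<in> {\<sigma>. \<sigma> permutes A}"
    have "\<sigma> ` S \<noteq> {}" "finite (\<sigma> ` S)" using assms finS by auto
    then have "Min (\<sigma> ` S) \<in> \<sigma> ` S" using Min_in by blast
    then obtain y where y: "y \<in> S" "\<sigma> y = Min (\<sigma> ` S)" by auto
    have "\<sigma> y < \<sigma> z" if "z \<in> S - {y}" for z
    proof -
      have "\<sigma> y \<le> \<sigma> z" using y that finS by auto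
      moreover have "\<sigma> y \<noteq> \<sigma> z" using that permutes_inj[of \<sigma> A] s by (auto simp: inj_eq)
      ultimately show ?thesis by simp
    qed
    then have "\<sigma> \<in> B y" using s unfolding B_def by auto
    then show "\<sigma> \<in> (\<Union>y\<in>S. B y)" by (rule UN_I[OF y(1)])
  qed
  have "fact (card A) = card {\<sigma>. \<sigma> permutes A}" using card_permutations[OF refl assms(1)] by simp
  also have "\<dots> \<le> card (\<Union>y\<in>S. B y)"
    by (rule card_mono[OF _ sub]) (auto intro: finB simp: finS)
  also have "\<dots> \<le> (\<Sum>y\<in>S. card (B y))" by (rule card_UN_le[OF finS])
  also have "\<dots> \<le> (\<Sum>y\<in>S. card (B x))" by (rule sum_mono) (use le in auto)
  also have "\<dots> = card S * card (B x)" by simp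
  finally show ?thesis unfolding B_def .
qed

definition Dset :: "lgraph \<Rightarrow> (nat \<times> nat \<times> nat) set" where
  "Dset G = {(a,b,x). a < b \<and> G a b \<noteq> 0 \<and> G a x \<noteq> 0 \<and> G b x \<noteq> 0}"

definition Nc :: "lgraph \<Rightarrow> nat \<Rightarrow> nat set" where
  "Nc G a = insert a {j. G a j \<noteq> 0}"

definition Qp :: "(nat \<Rightarrow> nat) \<Rightarrow> lgraph \<Rightarrow> nat \<times> nat \<times> nat \<Rightarrow> bool" where
  "Qp \<sigma> G p = (case p of (a,b,x) \<Rightarrow> \<forall>y\<in>Nc G a - {x}. \<sigma> x < \<sigma> y)"

lemma Dset_fin:
  assumes "labelled_regular n d G" shows "finite (Dset G)"
proof -
  have "Dset G \<subseteq> {1..n} \<times> {1..n} \<times> {1..n}"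
    unfolding Dset_def using lr_edge'[OF assms] by auto
  then show ?thesis by (rule finite_subset) auto
qed

lemma Dset_card:
  assumes LR: "labelled_regular n d G"
  shows "3 * num_triangles G \<le> card (Dset G)"
proof -
  define T3 where "T3 = {(a,b,c). a < b \<and> b < c \<and> G a b \<noteq> 0 \<and> G b c \<noteq> 0 \<and> G a c \<noteq> 0}"
  have sym: "G j i \<noteq> 0" if "G i j \<noteq> 0" for i j using lr_edge[OF LR that] by blast
  have fT: "finite T3"
  proof -
    have "T3 \<subseteq> {1..n} \<times> {1..n} \<times> {1..n}"
      unfolding T3_def using lr_edge'[OF LR] by auto
    then show ?thesis by (rule finite_subset) auto
  qed
  have "{T. \<exists>a b c. T = {a, b, c} \<and> a < b \<and> b < c \<and> G a b \<noteq> 0 \<and> G b c \<noteq> 0 \<and> G a c \<noteq> 0}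
        = (\<lambda>(a,b,c). {a,b,c}) ` T3"
    unfolding T3_def by (auto simp: image_iff)
  then have t: "num_triangles G \<le> card T3"
    unfolding num_triangles_def by (simp add: card_image_le fT)
  define g1 where "g1 = (\<lambda>(a::nat,b::nat,c::nat). (b,c,a))"
  define g2 where "g2 = (\<lambda>(a::nat,b::nat,c::nat). (a,c,b))"
  have i1: "inj_on g1 T3" "inj_on g2 T3" "inj_on id T3"
    unfolding g1_def g2_def inj_on_def by auto
  have s: "g1 ` T3 \<subseteq> Dset G" "g2 ` T3 \<subseteq> Dset G" "id ` T3 \<subseteq> Dset G"
    unfolding g1_def g2_def T3_def Dset_def using sym by auto
  have d: "g1 ` T3 \<inter> g2 ` T3 = {}" "(g1 ` T3 \<union> g2 ` T3) \<inter> id ` T3 = {}"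
    unfolding g1_def g2_def T3_def by auto
  have "card (g1 ` T3 \<union> g2 ` T3 \<union> id ` T3) = 3 * card T3"
    using d i1 fT by (simp add: card_Un_disjoint card_image)
  moreover have "card (g1 ` T3 \<union> g2 ` T3 \<union> id ` T3) \<le> card (Dset G)"
    by (rule card_mono[OF Dset_fin[OF LR]]) (use s in auto)
  ultimately show ?thesis using t by linarith
qed

lemma weight_ge:
  assumes LR: "labelled_regular n d G" and sp: "\<sigma> permutes {1..n}"
  shows "card {p \<in> Dset G. Qp \<sigma> G p} \<le> weight (phi (perm_act \<sigma> G)) (d * n div 2)"
proof -
  define H where "H = perm_act \<sigma> G"
  have LRH: "labelled_regular n d H" unfolding H_def by (rule perm_act_lr[OF sp LR])
  have Happ: "H (\<sigma> a) (\<sigma> b) = G a b" for a b unfolding H_def by (rule perm_act_app[OF sp])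
  have sym: "G j i \<noteq> 0" if "G i j \<noteq> 0" for i j using lr_edge[OF LR that] by blast
  have sinj: "\<sigma> a = \<sigma> b \<longleftrightarrow> a = b" for a b using permutes_inj[OF sp] by (auto simp: inj_eq)
  define M where "M = d * n div 2"
  have cE: "card (edges H) = M" using card_edges[OF LRH] unfolding M_def by simp
  define ed where "ed (p::nat\<times>nat\<times>nat) = (case p of (a,b,x) \<Rightarrow> (min (\<sigma> a) (\<sigma> b), max (\<sigma> a) (\<sigma> b)))" for p
  define f where "f p = rk H (ed p) + 1" for p
  let ?D = "{p \<in> Dset G. Qp \<sigma> G p}"
  have key: "ed p \<in> edges H \<and> phi H (f p) = 1" if "p \<in> ?D" for p
  proof -
    obtain a b x where p: "p = (a,b,x)" by (cases p)
    have ab: "a < b" "G a b \<noteq> 0" "G a x \<noteq> 0" "G b x \<noteq> 0" "\<forall>y\<in>Nc G a - {x}. \<sigma> x < \<sigma> y"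
      using that unfolding p Dset_def Qp_def by auto
    have xa: "x \<noteq> a" "x \<noteq> b" using ab lr_edge'[OF LR] by blast+
    have lt: "\<sigma> x < \<sigma> a" "\<sigma> x < \<sigma> b" using ab(5) xa ab(2) unfolding Nc_def by auto
    have ne: "\<sigma> a \<noteq> \<sigma> b" using ab(1) sinj by auto
    have e: "ed p \<in> edges H"
      unfolding ed_def p edges_def using ne Happ ab(2) sym[OF ab(2)]
      by (auto simp: min_def max_def)
    have "H (min (\<sigma> a) (\<sigma> b)) (\<sigma> x) \<noteq> 0" "H (max (\<sigma> a) (\<sigma> b)) (\<sigma> x) \<noteq> 0"
      using Happ ab by (auto simp: min_def max_def)
    moreover have "\<sigma> x < min (\<sigma> a) (\<sigma> b)" using lt by simp
    ultimately have "phi H (f p) = 1"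
      using phi_rk[OF LRH, of "min (\<sigma> a) (\<sigma> b)" "max (\<sigma> a) (\<sigma> b)" "\<sigma> x"] e
      unfolding f_def ed_def p by simp
    then show ?thesis using e by simp
  qed
  have inj: "inj_on f ?D"
  proof (rule inj_onI)
    fix p q assume pq: "p \<in> ?D" "q \<in> ?D" "f p = f q"
    have "ed p = ed q" using pq key rk_inj[OF LRH] unfolding f_def inj_on_def by auto
    obtain a b x where p: "p = (a,b,x)" by (cases p)
    obtain a' b' x' where q: "q = (a',b',x')" by (cases q)
    have ab: "a < b" "a' < b'" "G a x \<noteq> 0" "G a' x' \<noteq> 0"
      "\<forall>y\<in>Nc G a - {x}. \<sigma> x < \<sigma> y" "\<forall>y\<in>Nc G a' - {x'}. \<sigma> x' < \<sigma> y"
      using pq unfolding p q Dset_def Qp_def by auto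
    have "{\<sigma> a, \<sigma> b} = {\<sigma> a', \<sigma> b'}"
      using \<open>ed p = ed q\<close> unfolding ed_def p q by (auto simp: min_def max_def split: if_splits)
    then have "{a, b} = {a', b'}" using sinj by (auto simp: doubleton_eq_iff)
    then have aa: "a = a'" "b = b'" using ab(1,2) by (auto simp: doubleton_eq_iff)
    have "x = x'"
    proof (rule ccontr)
      assume "x \<noteq> x'"
      then have "\<sigma> x < \<sigma> x'" "\<sigma> x' < \<sigma> x" using ab aa unfolding Nc_def by auto
      then show False by simp
    qed
    then show "p = q" using aa p q by simp
  qed
  have img: "f ` ?D \<subseteq> {k \<in> {1..M}. phi H k = 1}"
  proof
    fix k assume "k \<in> f ` ?D"
    then obtain p where p: "p \<in> ?D" "k = f p" by blast
    have "rk H (ed p) < M" using rk_bound[OF LRH] key[OF p(1)] cE by auto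
    then show "k \<in> {k \<in> {1..M}. phi H k = 1}" using key[OF p(1)] p(2) unfolding f_def by auto
  qed
  have "card ?D = card (f ` ?D)" using card_image[OF inj] by simp
  also have "\<dots> \<le> card {k \<in> {1..M}. phi H k = 1}" by (rule card_mono[OF _ img]) auto
  also have "\<dots> = (\<Sum>k\<in>{k \<in> {1..M}. phi H k = 1}. phi H k)" by simp
  also have "\<dots> \<le> (\<Sum>k\<in>{1..M}. phi H k)" by (rule sum_mono2) auto
  finally show ?thesis unfolding weight_def H_def M_def .
qed

lemma ch2: "2 * real (d choose 2) = real d * (real d - 1)"
proof (cases d)
  case 0 then show ?thesis by simp
next
  case (Suc m)
  have "even (Suc m * m)" by simp
  then have "2 * (Suc m * m div 2) = Suc m * m" by simp
  then have "2 * (d choose 2) = d * m" using Suc by (simp add: choose_two)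
  then have "2 * real (d choose 2) = real d * real m" by (metis of_nat_mult of_nat_numeral)
  then show ?thesis using Suc by simp
qed

lemma card_filter_sum:
  assumes "finite A"
  shows "card {x \<in> A. P x} = (\<Sum>x\<in>A. if P x then 1 else (0::nat))"
  using assms by (simp add: sum.If_cases Int_def)

lemma core:
  assumes LR: "labelled_regular n d G" and T: "real (num_triangles G) \<ge> c * T_max n d" and c: "0 < c"
  shows "(\<Sum>\<sigma>\<in>{\<sigma>. \<sigma> permutes {1..n}}. real (weight (phi (perm_act \<sigma> G)) (d * n div 2)))
          \<ge> fact n * T_c c d n"
proof -
  define P where "P = {\<sigma>. \<sigma> permutes ({1..n}::nat set)}"
  define D where "D = Dset G"
  have fP: "finite P" unfolding P_def by (rule finite_permutations) simp
  have fD: "finite D" unfolding D_def by (rule Dset_fin[OF LR])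
  have s1: "(\<Sum>\<sigma>\<in>P. real (card {p \<in> D. Qp \<sigma> G p})) \<le> (\<Sum>\<sigma>\<in>P. real (weight (phi (perm_act \<sigma> G)) (d * n div 2)))"
    by (rule sum_mono) (use weight_ge[OF LR] in \<open>auto simp: P_def D_def\<close>)
  have s2: "(\<Sum>\<sigma>\<in>P. card {p \<in> D. Qp \<sigma> G p}) = (\<Sum>p\<in>D. card {\<sigma> \<in> P. Qp \<sigma> G p})"
  proof -
    have "(\<Sum>\<sigma>\<in>P. card {p \<in> D. Qp \<sigma> G p}) = (\<Sum>\<sigma>\<in>P. \<Sum>p\<in>D. if Qp \<sigma> G p then 1 else (0::nat))"
      by (rule sum.cong[OF refl]) (rule card_filter_sum[OF fD])
    also have "\<dots> = (\<Sum>p\<in>D. \<Sum>\<sigma>\<in>P. if Qp \<sigma> G p then 1 else (0::nat))" by (rule sum.swap)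
    also have "\<dots> = (\<Sum>p\<in>D. card {\<sigma> \<in> P. Qp \<sigma> G p})"
      by (rule sum.cong[OF refl]) (rule card_filter_sum[OF fP, symmetric])
    finally show ?thesis .
  qed
  have s3: "fact n \<le> (d + 1) * card {\<sigma> \<in> P. Qp \<sigma> G p}" if p: "p \<in> D" for p
  proof -
    obtain a b x where pp: "p = (a,b,x)" by (cases p)
    have ab: "G a b \<noteq> 0" "G a x \<noteq> 0" using p unfolding pp D_def Dset_def by auto
    have a: "a \<in> {1..n}" using lr_edge'[OF LR ab(1)] by simp
    have nota: "a \<notin> {j. G a j \<noteq> 0}" using lr_edge'[OF LR] by blast
    have finN: "finite {j. G a j \<noteq> 0}"
      by (rule finite_subset[of _ "{1..n}"]) (use lr_edge'[OF LR] in auto)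
    have cN: "card {j. G a j \<noteq> 0} = d" using bij_betw_same_card[OF lr_bij[OF LR a]] by simp
    have cS: "card (Nc G a) = d + 1" unfolding Nc_def using nota finN cN by simp
    have SA: "Nc G a \<subseteq> {1..n}" unfolding Nc_def using a lr_edge'[OF LR] by auto
    have xS: "x \<in> Nc G a" unfolding Nc_def using ab by simp
    have eq: "{\<sigma>. \<sigma> permutes {1..n} \<and> (\<forall>y\<in>Nc G a - {x}. \<sigma> x < \<sigma> y)} = {\<sigma> \<in> P. Qp \<sigma> G p}"
      unfolding P_def Qp_def pp by simp
    show ?thesis using count_min[OF _ SA xS] cS eq by simp
  qed
  have s4: "3 * num_triangles G * fact n \<le> (d + 1) * (\<Sum>p\<in>D. card {\<sigma> \<in> P. Qp \<sigma> G p})"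
  proof -
    have "3 * num_triangles G * fact n \<le> card D * fact n"
      using Dset_card[OF LR] unfolding D_def by simp
    also have "\<dots> = (\<Sum>p\<in>D. fact n)" by simp
    also have "\<dots> \<le> (\<Sum>p\<in>D. (d + 1) * card {\<sigma> \<in> P. Qp \<sigma> G p})" by (rule sum_mono) (rule s3)
    also have "\<dots> = (d + 1) * (\<Sum>p\<in>D. card {\<sigma> \<in> P. Qp \<sigma> G p})" by (simp add: sum_distrib_left)
    finally show ?thesis .
  qed
  define W where "W = (\<Sum>\<sigma>\<in>P. real (weight (phi (perm_act \<sigma> G)) (d * n div 2)))"
  have W: "3 * real (num_triangles G) * fact n \<le> (real d + 1) * W"
  proof -
    have "3 * real (num_triangles G) * fact n = real (3 * num_triangles G * fact n)" by simp
    also have "\<dots> \<le> real ((d + 1) * (\<Sum>p\<in>D. card {\<sigma> \<in> P. Qp \<sigma> G p}))" using s4 by linarith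
    also have "\<dots> = (real d + 1) * real (\<Sum>\<sigma>\<in>P. card {p \<in> D. Qp \<sigma> G p})" using s2 by (simp add: algebra_simps)
    also have "\<dots> \<le> (real d + 1) * W" unfolding W_def using s1 by (intro mult_left_mono) auto
    finally show ?thesis .
  qed
  have tc: "(real d + 1) * T_c c d n = c * T_max n d * 3"
  proof -
    have ch: "real (d choose 2) = real d * (real d - 1) / 2" using ch2[of d] by simp
    have ne: "real d + 1 \<noteq> 0" by (simp add: add_nonneg_eq_0_iff)
    show ?thesis unfolding T_c_def T_max_def ch using ne by (simp add: field_simps)
  qed
  have "(real d + 1) * (fact n * T_c c d n) = fact n * (c * T_max n d * 3)" using tc by simp
  also have "\<dots> \<le> fact n * (3 * real (num_triangles G))" using T by (intro mult_left_mono) auto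
  also have "\<dots> \<le> (real d + 1) * W" using W by (simp add: algebra_simps)
  finally have "(real d + 1) * (fact n * T_c c d n) \<le> (real d + 1) * W" .
  then have "fact n * T_c c d n \<le> W" by (rule mult_left_le_imp_le) simp
  then show ?thesis unfolding W_def P_def .
qed

theorem lemma2:
  fixes c :: real and n d :: nat and G :: lgraph
  assumes "0 < c" "c < 1" "even (d * n)" "G \<in> G_star d c n"
  shows "real (card (orbit n G \<inter> {H. phi H \<in> L_set c d n}))
           \<ge> 2 / (real d * real n) * real (card (orbit n G))"
proof -
  define P where "P = {\<sigma>. \<sigma> permutes ({1..n}::nat set)}"
  define M where "M = d * n div 2"
  define w where "w H = real (weight (phi H) M)" for H
  define Orb where "Orb = orbit n G"
  have LR: "labelled_regular n d G" and T: "real (num_triangles G) \<ge> c * T_max n d"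
    using assms(4) unfolding G_star_def by auto
  have fP: "finite P" unfolding P_def by (rule finite_permutations) simp
  have O_eq: "Orb = (\<lambda>\<sigma>. perm_act \<sigma> G) ` P" unfolding Orb_def orbit_def P_def by auto
  have fO: "finite Orb" unfolding O_eq using fP by simp
  have core': "fact n * T_c c d n \<le> (\<Sum>\<tau>\<in>P. w (perm_act \<tau> G))"
    using core[OF LR T assms(1)] unfolding P_def w_def M_def by simp
  have A: "fact n * T_c c d n \<le> (\<Sum>\<tau>\<in>P. w (perm_act \<tau> H))" if HO: "H \<in> Orb" for H
  proof -
    obtain \<sigma> where s: "\<sigma> \<in> P" "H = perm_act \<sigma> G" using HO O_eq by auto
    have "(\<Sum>\<tau>\<in>P. w (perm_act \<tau> H)) = (\<Sum>\<tau>\<in>P. w (perm_act (\<tau> \<circ> \<sigma>) G))"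
      by (rule sum.cong[OF refl]) (use s in \<open>simp add: P_def perm_act_comp\<close>)
    also have "\<dots> = (\<Sum>\<tau>\<in>P. w (perm_act \<tau> G))"
      using sum_permutations_compose_right[of \<sigma> "{1..n}" "\<lambda>\<tau>. w (perm_act \<tau> G)"] s(1)
      unfolding P_def by simp
    finally show ?thesis using core' by simp
  qed
  have B: "(\<Sum>H\<in>Orb. w (perm_act \<tau> H)) = (\<Sum>H\<in>Orb. w H)" if t: "\<tau> \<in> P" for \<tau>
  proof -
    have tp: "\<tau> permutes {1..n}" using t unfolding P_def by simp
    have "bij_betw (perm_act \<tau>) Orb Orb"
    proof (rule bij_betw_imageI)
      show "inj_on (perm_act \<tau>) Orb" using perm_act_inj[OF tp] by (rule inj_on_subset) simp
      show "perm_act \<tau> ` Orb = Orb"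
      proof (intro equalityI subsetI)
        fix K assume "K \<in> perm_act \<tau> ` Orb"
        then obtain \<sigma> where s: "\<sigma> \<in> P" "K = perm_act \<tau> (perm_act \<sigma> G)" using O_eq by auto
        then have "K = perm_act (\<tau> \<circ> \<sigma>) G" using perm_act_comp tp unfolding P_def by blast
        moreover have "\<tau> \<circ> \<sigma> \<in> P" using s tp unfolding P_def by (simp add: permutes_compose)
        ultimately show "K \<in> Orb" using O_eq by auto
      next
        fix K assume "K \<in> Orb"
        then obtain \<sigma> where s: "\<sigma> \<in> P" "K = perm_act \<sigma> G" using O_eq by auto
        have ip: "inv \<tau> \<circ> \<sigma> permutes {1..n}" using s(1) permutes_inv[OF tp] unfolding P_def
          by (intro permutes_compose) auto
        have "\<tau> \<circ> (inv \<tau> \<circ> \<sigma>) = \<sigma>" using permutes_inv_o(1)[OF tp] by (metis comp_assoc id_comp)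
        then have "K = perm_act \<tau> (perm_act (inv \<tau> \<circ> \<sigma>) G)" using s perm_act_comp[OF tp ip] by simp
        moreover have "perm_act (inv \<tau> \<circ> \<sigma>) G \<in> Orb" using O_eq ip unfolding P_def by auto
        ultimately show "K \<in> perm_act \<tau> ` Orb" by blast
      qed
    qed
    then show ?thesis by (rule sum.reindex_bij_betw)
  qed
  have avg: "real (card Orb) * T_c c d n \<le> (\<Sum>H\<in>Orb. w H)"
  proof -
    have "real (card Orb) * (fact n * T_c c d n) = (\<Sum>H\<in>Orb. fact n * T_c c d n)" by simp
    also have "\<dots> \<le> (\<Sum>H\<in>Orb. \<Sum>\<tau>\<in>P. w (perm_act \<tau> H))" by (rule sum_mono) (rule A)
    also have "\<dots> = (\<Sum>\<tau>\<in>P. \<Sum>H\<in>Orb. w (perm_act \<tau> H))" by (rule sum.swap)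
    also have "\<dots> = (\<Sum>\<tau>\<in>P. \<Sum>H\<in>Orb. w H)" by (rule sum.cong[OF refl]) (rule B)
    also have "\<dots> = real (card P) * (\<Sum>H\<in>Orb. w H)" by simp
    also have "card P = fact n" unfolding P_def using card_permutations[of "{1..n::nat}" n] by simp
    finally have "fact n * (real (card Orb) * T_c c d n) \<le> fact n * (\<Sum>H\<in>Orb. w H)"
      by (simp add: algebra_simps)
    then show ?thesis by (rule mult_left_le_imp_le) simp
  qed
  define good where "good = Orb \<inter> {H. phi H \<in> L_set c d n}"
  have good_iff: "H \<in> good \<longleftrightarrow> H \<in> Orb \<and> w H \<ge> T_c c d n - 1" for H
    by (simp only: good_def L_set_def w_def M_def Int_iff mem_Collect_eq)
  have wM: "w H \<le> real M" for H
  proof -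
    have le1: "phi H j \<le> 1" for j unfolding phi_def by simp
    have "weight (phi H) M \<le> (\<Sum>j=1..M. 1)" unfolding weight_def
      by (rule sum_mono) (rule le1)
    then show ?thesis unfolding w_def by simp
  qed
  have w0: "0 \<le> w H" for H unfolding w_def by simp
  define g where "g = real (card good)"
  define b where "b = real (card (Orb - good))"
  have gsub: "good \<subseteq> Orb" unfolding good_def by (rule Int_lower1)
  have fg: "finite good" using fO gsub by (rule finite_subset[rotated])
  have cO: "real (card Orb) = g + b"
  proof -
    have u: "good \<union> (Orb - good) = Orb" using gsub by blast
    have "card (good \<union> (Orb - good)) = card good + card (Orb - good)"
      by (rule card_Un_disjoint) (use fg fO in auto)
    then show ?thesis unfolding g_def b_def u by simp
  qed
  have sumsplit: "(\<Sum>H\<in>Orb. w H) = (\<Sum>H\<in>good. w H) + (\<Sum>H\<in>Orb - good. w H)"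
    using sum.subset_diff[OF gsub fO, of w] by simp
  have sg: "(\<Sum>H\<in>good. w H) \<le> g * real M"
  proof -
    have "(\<Sum>H\<in>good. w H) \<le> (\<Sum>H\<in>good. real M)" by (rule sum_mono) (rule wM)
    then show ?thesis unfolding g_def by simp
  qed
  have sb: "(\<Sum>H\<in>Orb - good. w H) \<le> b * (T_c c d n - 1)"
  proof -
    have "w H \<le> T_c c d n - 1" if "H \<in> Orb - good" for H
    proof -
      have "\<not> (w H \<ge> T_c c d n - 1)" using that good_iff by blast
      then show ?thesis by linarith
    qed
    then have "(\<Sum>H\<in>Orb - good. w H) \<le> (\<Sum>H\<in>Orb - good. T_c c d n - 1)"
      by (rule sum_mono)
    then show ?thesis unfolding b_def by simp
  qed
  show ?thesis
  proof (cases "d * n = 0")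
    case True
    then have "real d * real n = 0" by simp
    then have "2 / (real d * real n) = 0" by simp
    then show ?thesis by (simp only: mult_zero_left of_nat_0_le_iff)
  next
    case False
    obtain k where k: "d * n = 2 * k" using assms(3) by (rule evenE)
    have Mk: "M = k" unfolding M_def k by simp
    have M1: "1 \<le> M" using False k Mk by simp
    have "real d * real n = real (d * n)" by simp
    also have "\<dots> = 2 * real M" unfolding k Mk by simp
    finally have Mr: "real d * real n = 2 * real M" .
    have key: "g + b \<le> g * real M"
    proof (cases "T_c c d n \<ge> 1")
      case True
      have e1: "(g + b) * T_c c d n = real (card Orb) * T_c c d n" using cO by simp
      have h1: "(g + b) * T_c c d n \<le> g * real M + b * (T_c c d n - 1)"
        using avg sumsplit sg sb e1 by linarith
      have h2: "g * T_c c d n + b * T_c c d n \<le> g * real M + b * T_c c d n - b"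
        using h1 by (simp add: algebra_simps)
      have "0 \<le> g" unfolding g_def by simp
      then have h3: "g \<le> g * T_c c d n" using True mult_left_mono[of 1 "T_c c d n" g] by simp
      show ?thesis using h2 h3 by linarith
    next
      case False
      have "Orb - good = {}"
      proof (rule ccontr)
        assume "Orb - good \<noteq> {}"
        then obtain H where "H \<in> Orb" "H \<notin> good" by blast
        then have "\<not> (w H \<ge> T_c c d n - 1)" using good_iff by blast
        moreover have "w H \<ge> 0" by (rule w0)
        ultimately show False using False by linarith
      qed
      then have b0: "b = 0" unfolding b_def by (metis card.empty of_nat_0)
      have "0 \<le> g" unfolding g_def by simp
      then have "g * 1 \<le> g * real M" using M1 by (intro mult_left_mono) auto
      then show ?thesis using b0 by simp
    qed
    have "2 / (real d * real n) * real (card Orb) = (g + b) / real M" using Mr cO by simp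
    also have "\<dots> \<le> g" using key M1 by (simp add: divide_le_eq)
    finally show ?thesis unfolding g_def good_def Orb_def .
  qed
qed

end
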